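(* Assume (A1), (A2) and (C4), and let $h_n=n^{-d/(2+d)}$. Then $$\sup_{x\in[0,1]^d}\Big\|\sup_{g\in\mathrm{Lip}(B)}|g_n(x)-g(x)|\Big\|_2=O\big[n^{-\frac{d}{2+d}}\big],$$ where $\|\cdot\|_2$ is the $L^2(\mathbb P)$ norm and $O[\cdot]$ is the usual deterministic big-O as $n\to\infty$.
   Context: Fix an integer $d\ge1$. For $x=(x_1,\dots,x_d)\in\mathbb{R}^d$ let $\|x\|=\max_{1\le k\le d}|x_k|$. Let $(\varepsilon_i)_{i\in\mathbb{Z}^d}$ be a strictly stationary real random field on a probability space $(\Omega,\mathcal F,\mathbb P)$ with $E\varepsilon_0=0$. Strict stationarity means: for all $k\in\mathbb{Z}^d$, $n\ge1$ and $i_1,\dots,i_n\in\mathbb{Z}^d$, the vectors $(\varepsilon_{i_1},\dots,\varepsilon_{i_n})$ and $(\varepsilon_{i_1+k},\dots,\varepsilon_{i_n+k})$ have the same law. For $g:[0,1]^d\to\mathbb{R}$ and $\Lambda_n=\{1,\dots,n\}^d$, set $Y_i=g(i/n)+\varepsilon_i$ for $i\in\Lambda_n$. Let $K$ be a probability density on $\mathbb{R}^d$ and $(h_n)_{n\ge1}$ positive numbers. For $x\in[0,1]^d$ define $$g_n(x)=\frac{\sum_{i\in\Lambda_n}Y_i\,K\big((x-i/n)/h_n\big)}{\sum_{i\in\Lambda_n}K\big((x-i/n)/h_n\big)}.$$ This estimator depends on $g$ through the $Y_i$. Assumption (A1): $K$ is symmetric and nonnegative, and supported in $[-1,1]^d$.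 There is $\eta>0$ with $|K(x)-K(y)|\le\eta\|x-y\|$ for all $x,y\in[-1,1]^d$, and there are constants $c,C>0$ with $c\le K(x)\le C$ for all $x\in[-1,1]^d$. Assumption (A2) / $\mathrm{Lip}(B)$: $B>0$ is fixed and $\mathrm{Lip}(B)$ is the set of $g:[0,1]^d\to\mathbb{R}$ with $|g(x)-g(y)|\le B\|x-y\|$ for all $x,y$. Condition (C4): $\varepsilon_0\in L^2$ and $\sum_{k\in\mathbb{Z}^d}|E(\varepsilon_0\varepsilon_k)|<\infty$. *)

theory Defs
  imports "HOL-Probability.Probability"
begin

definition supnorm :: "real^'d \<Rightarrow> real" where
  "supnorm x = Max (range (\<lambda>k. \<bar>x $ k\<bar>))"

definition unit_cube :: "(real^'d) set" where
  "unit_cube = {x. \<forall>k. 0 \<le> x $ k \<and> x $ k \<le> 1}"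

definition Lambda :: "nat \<Rightarrow> (int^'d) set" where
  "Lambda n = {i. \<forall>k. 1 \<le> i $ k \<and> i $ k \<le> int n}"

definition grid_pt :: "nat \<Rightarrow> int^'d \<Rightarrow> real^'d" where
  "grid_pt n i = (\<chi> k. real_of_int (i $ k) / real n)"

text \<open>Assumption (A1) on the kernel, together with K being a probability density.\<close>
definition kernel_A1 :: "(real^'d \<Rightarrow> real) \<Rightarrow> bool" where
  "kernel_A1 K \<longleftrightarrow>
     K \<in> borel_measurable lborel \<and>
     (\<integral>\<^sup>+ x. ennreal (K x) \<partial>lborel) = 1 \<and>
     (\<forall>x. K (- x) = K x) \<and>
     (\<forall>x. 0 \<le> K x) \<and>
     (\<forall>x. supnorm x > 1 \<longrightarrow> K x = 0) \<and>
     (\<exists>\<eta>>0. \<forall>x y. supnorm x \<le> 1 \<longrightarrow> supnorm y \<le> 1 \<longrightarrow>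
              \<bar>K x - K y\<bar> \<le> \<eta> * supnorm (x - y)) \<and>
     (\<exists>c>0. \<exists>C>0. \<forall>x. supnorm x \<le> 1 \<longrightarrow> c \<le> K x \<and> K x \<le> C)"

text \<open>Lip(B): B-Lipschitz functions on [0,1]^d w.r.t. the max norm
  (only values on the cube are constrained).\<close>
definition Lip :: "real \<Rightarrow> (real^'d \<Rightarrow> real) set" where
  "Lip B = {g. \<forall>x\<in>unit_cube. \<forall>y\<in>unit_cube. \<bar>g x - g y\<bar> \<le> B * supnorm (x - y)}"

definition strictly_stationary ::
    "'a measure \<Rightarrow> (int^'d \<Rightarrow> 'a \<Rightarrow> real) \<Rightarrow> bool" where
  "strictly_stationary M \<epsilon> \<longleftrightarrow>
     (\<forall>k. \<forall>I. finite I \<longrightarrow>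
        distr M (PiM I (\<lambda>_. borel)) (\<lambda>\<omega>. \<lambda>i\<in>I. \<epsilon> (i + k) \<omega>)
      = distr M (PiM I (\<lambda>_. borel)) (\<lambda>\<omega>. \<lambda>i\<in>I. \<epsilon> i \<omega>))"

definition cond_C4 :: "'a measure \<Rightarrow> (int^'d \<Rightarrow> 'a \<Rightarrow> real) \<Rightarrow> bool" where
  "cond_C4 M \<epsilon> \<longleftrightarrow>
     integrable M (\<lambda>\<omega>. (\<epsilon> 0 \<omega>)\<^sup>2) \<and>
     (\<lambda>k. \<bar>integral\<^sup>L M (\<lambda>\<omega>. \<epsilon> 0 \<omega> * \<epsilon> k \<omega>)\<bar>) summable_on UNIV"

text \<open>The Nadaraya-Watson type estimator g_n(x) with Y_i = g(i/n) + eps_i.\<close>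
definition g_est ::
    "(real^'d \<Rightarrow> real) \<Rightarrow> (nat \<Rightarrow> real) \<Rightarrow> (int^'d \<Rightarrow> 'a \<Rightarrow> real) \<Rightarrow>
     (real^'d \<Rightarrow> real) \<Rightarrow> nat \<Rightarrow> real^'d \<Rightarrow> 'a \<Rightarrow> real" where
  "g_est K h \<epsilon> g n x \<omega> =
     (\<Sum>i\<in>Lambda n. (g (grid_pt n i) + \<epsilon> i \<omega>) * K ((1 / h n) *\<^sub>R (x - grid_pt n i)))
     / (\<Sum>i\<in>Lambda n. K ((1 / h n) *\<^sub>R (x - grid_pt n i)))"

end

theory Submission
  imports Defs
begin


lemma supnorm_le_iff: "supnorm (x::real^'d) \<le> t \<longleftrightarrow> (\<forall>k. \<bar>x $ k\<bar> \<le> t)"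
  unfolding supnorm_def by (subst Max_le_iff) auto

lemma comp_le_supnorm: "\<bar>(x::real^'d) $ k\<bar> \<le> supnorm x"
  unfolding supnorm_def by (rule Max_ge) auto

lemma supnorm_nonneg: "0 \<le> supnorm (x::real^'d)"
  using comp_le_supnorm[of x] abs_ge_zero order_trans by blast

lemma vec_set_eq: "{v::'b^'d. \<forall>k. v $ k \<in> B k} = vec_lambda ` (Pi\<^sub>E UNIV B)"
proof (intro set_eqI iffI)
  fix v :: "'b^'d" assume "v \<in> {v. \<forall>k. v $ k \<in> B k}"
  then have "vec_nth v \<in> Pi\<^sub>E UNIV B" by auto
  then show "v \<in> vec_lambda ` (Pi\<^sub>E UNIV B)" by (metis image_eqI vec_nth_inverse)
next
  fix v :: "'b^'d" assume "v \<in> vec_lambda ` (Pi\<^sub>E UNIV B)"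
  then show "v \<in> {v. \<forall>k. v $ k \<in> B k}" by auto
qed

lemma vec_set_card:
  assumes "\<And>k. finite (B k)"
  shows "finite {v::'b^'d. \<forall>k. v $ k \<in> B k}"
    and "card {v::'b^'d. \<forall>k. v $ k \<in> B k} = (\<Prod>k\<in>UNIV. card (B k))"
proof -
  have inj: "inj_on vec_lambda (Pi\<^sub>E UNIV B)"
    by (intro inj_onI) (simp add: vec_lambda_inject)
  have fin: "finite (Pi\<^sub>E (UNIV::'d set) B)" using assms by (intro finite_PiE) auto
  show "finite {v::'b^'d. \<forall>k. v $ k \<in> B k}" unfolding vec_set_eq using fin by simp
  show "card {v::'b^'d. \<forall>k. v $ k \<in> B k} = (\<Prod>k\<in>UNIV. card (B k))"
    unfolding vec_set_eq using inj by (simp add: card_image card_PiE)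
qed

lemma count_1d:
  fixes t r :: real and n :: nat
  assumes "0 \<le> t" "t \<le> real n" "1 \<le> r" "r \<le> real n"
  shows "\<exists>a::int. {a..<a + \<lfloor>r\<rfloor>} \<subseteq> {m::int. 1 \<le> m \<and> m \<le> int n \<and> \<bar>t - real_of_int m\<bar> \<le> r}"
proof (cases "t \<le> r")
  case True
  show ?thesis
  proof (intro exI[of _ 1] subsetI)
    fix m assume "m \<in> {1::int..<1 + \<lfloor>r\<rfloor>}"
    then have m: "1 \<le> m" "m \<le> \<lfloor>r\<rfloor>" by auto
    then have "real_of_int m \<le> r" by linarith
    moreover have "\<lfloor>r\<rfloor> \<le> int n" using assms by linarith
    ultimately show "m \<in> {m::int. 1 \<le> m \<and> m \<le> int n \<and> \<bar>t - real_of_int m\<bar> \<le> r}"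
      using m True assms by auto
  qed
next
  case False
  show ?thesis
  proof (intro exI[of _ "\<lceil>t - r\<rceil>"] subsetI)
    fix m assume "m \<in> {\<lceil>t - r\<rceil>..<\<lceil>t - r\<rceil> + \<lfloor>r\<rfloor>}"
    then have m: "\<lceil>t - r\<rceil> \<le> m" "m \<le> \<lceil>t - r\<rceil> + \<lfloor>r\<rfloor> - 1" by auto
    have "t - r \<le> m" using m(1) by linarith
    moreover have "real_of_int m \<le> t" using m(2) by linarith
    moreover have "0 < \<lceil>t - r\<rceil>" using False by linarith
    ultimately show "m \<in> {m::int. 1 \<le> m \<and> m \<le> int n \<and> \<bar>t - real_of_int m\<bar> \<le> r}"
      using m assms by auto
  qed
qed



lemma stat_cov:
  fixes \<epsilon> :: "int^'d \<Rightarrow> 'a \<Rightarrow> real"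
  assumes st: "strictly_stationary M \<epsilon>" and meas: "\<And>i. \<epsilon> i \<in> borel_measurable M"
  shows "integral\<^sup>L M (\<lambda>\<omega>. \<epsilon> i \<omega> * \<epsilon> j \<omega>) = integral\<^sup>L M (\<lambda>\<omega>. \<epsilon> 0 \<omega> * \<epsilon> (j - i) \<omega>)"
proof -
  define I where "I = {0, j - i}"
  have fin: "finite I" unfolding I_def by simp
  have eq: "distr M (PiM I (\<lambda>_. borel)) (\<lambda>\<omega>. \<lambda>l\<in>I. \<epsilon> (l + i) \<omega>)
      = distr M (PiM I (\<lambda>_. borel)) (\<lambda>\<omega>. \<lambda>l\<in>I. \<epsilon> l \<omega>)"
    using st fin unfolding strictly_stationary_def by blast
  define f where "f = (\<lambda>y::int^'d \<Rightarrow> real. y 0 * y (j - i))"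
  have fm: "f \<in> borel_measurable (PiM I (\<lambda>_. borel))"
    unfolding f_def I_def by measurable
  have m1: "(\<lambda>\<omega>. \<lambda>l\<in>I. \<epsilon> (l + i) \<omega>) \<in> M \<rightarrow>\<^sub>M PiM I (\<lambda>_. borel)"
    by (intro measurable_restrict meas)
  have m2: "(\<lambda>\<omega>. \<lambda>l\<in>I. \<epsilon> l \<omega>) \<in> M \<rightarrow>\<^sub>M PiM I (\<lambda>_. borel)"
    by (intro measurable_restrict meas)
  have "integral\<^sup>L M (\<lambda>\<omega>. \<epsilon> i \<omega> * \<epsilon> j \<omega>) = integral\<^sup>L M (\<lambda>\<omega>. f (\<lambda>l\<in>I. \<epsilon> (l + i) \<omega>))"
    unfolding f_def I_def by simp
  also have "\<dots> = integral\<^sup>L (distr M (PiM I (\<lambda>_. borel)) (\<lambda>\<omega>. \<lambda>l\<in>I. \<epsilon> (l + i) \<omega>)) f"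
    by (rule integral_distr[symmetric, OF m1 fm])
  also have "\<dots> = integral\<^sup>L (distr M (PiM I (\<lambda>_. borel)) (\<lambda>\<omega>. \<lambda>l\<in>I. \<epsilon> l \<omega>)) f"
    by (simp only: eq)
  also have "\<dots> = integral\<^sup>L M (\<lambda>\<omega>. f (\<lambda>l\<in>I. \<epsilon> l \<omega>))"
    by (rule integral_distr[OF m2 fm])
  also have "\<dots> = integral\<^sup>L M (\<lambda>\<omega>. \<epsilon> 0 \<omega> * \<epsilon> (j - i) \<omega>)"
    unfolding f_def I_def by simp
  finally show ?thesis .
qed

lemma stat_sq:
  fixes \<epsilon> :: "int^'d \<Rightarrow> 'a \<Rightarrow> real"
  assumes st: "strictly_stationary M \<epsilon>" and meas: "\<And>i. \<epsilon> i \<in> borel_measurable M"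
    and int0: "integrable M (\<lambda>\<omega>. (\<epsilon> 0 \<omega>)\<^sup>2)"
  shows "integrable M (\<lambda>\<omega>. (\<epsilon> i \<omega>)\<^sup>2)"
proof -
  define I where "I = {0::int^'d}"
  have fin: "finite I" unfolding I_def by simp
  have eq: "distr M (PiM I (\<lambda>_. borel)) (\<lambda>\<omega>. \<lambda>l\<in>I. \<epsilon> (l + i) \<omega>)
      = distr M (PiM I (\<lambda>_. borel)) (\<lambda>\<omega>. \<lambda>l\<in>I. \<epsilon> l \<omega>)"
    using st fin unfolding strictly_stationary_def by blast
  define f where "f = (\<lambda>y::int^'d \<Rightarrow> real. (y 0)\<^sup>2)"
  have fm: "f \<in> borel_measurable (PiM I (\<lambda>_. borel))"
    unfolding f_def I_def by measurable
  have m1: "(\<lambda>\<omega>. \<lambda>l\<in>I. \<epsilon> (l + i) \<omega>) \<in> M \<rightarrow>\<^sub>M PiM I (\<lambda>_. borel)"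
    by (intro measurable_restrict meas)
  have m2: "(\<lambda>\<omega>. \<lambda>l\<in>I. \<epsilon> l \<omega>) \<in> M \<rightarrow>\<^sub>M PiM I (\<lambda>_. borel)"
    by (intro measurable_restrict meas)
  have "integrable M (\<lambda>\<omega>. f (\<lambda>l\<in>I. \<epsilon> l \<omega>))"
    using int0 unfolding f_def I_def by simp
  then have "integrable (distr M (PiM I (\<lambda>_. borel)) (\<lambda>\<omega>. \<lambda>l\<in>I. \<epsilon> l \<omega>)) f"
    using integrable_distr_eq[OF m2 fm] by simp
  then have "integrable (distr M (PiM I (\<lambda>_. borel)) (\<lambda>\<omega>. \<lambda>l\<in>I. \<epsilon> (l + i) \<omega>)) f"
    by (simp only: eq)
  then have "integrable M (\<lambda>\<omega>. f (\<lambda>l\<in>I. \<epsilon> (l + i) \<omega>))"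
    using integrable_distr_eq[OF m1 fm] by simp
  then show ?thesis unfolding f_def I_def by simp
qed

lemma prod_integrable:
  fixes X Y :: "'a \<Rightarrow> real"
  assumes "integrable M (\<lambda>\<omega>. (X \<omega>)\<^sup>2)" "integrable M (\<lambda>\<omega>. (Y \<omega>)\<^sup>2)"
    "X \<in> borel_measurable M" "Y \<in> borel_measurable M"
  shows "integrable M (\<lambda>\<omega>. X \<omega> * Y \<omega>)"
proof (rule Bochner_Integration.integrable_bound[where f = "\<lambda>\<omega>. (X \<omega>)\<^sup>2 + (Y \<omega>)\<^sup>2"])
  show "integrable M (\<lambda>\<omega>. (X \<omega>)\<^sup>2 + (Y \<omega>)\<^sup>2)" using assms by simp
  show "(\<lambda>\<omega>. X \<omega> * Y \<omega>) \<in> borel_measurable M" using assms by measurable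
  show "AE x in M. norm (X x * Y x) \<le> norm ((X x)\<^sup>2 + (Y x)\<^sup>2)"
  proof (rule AE_I2)
    fix x
    have "\<bar>X x * Y x\<bar> \<le> (X x)\<^sup>2 + (Y x)\<^sup>2"
      using sum_squares_bound[of "X x" "Y x"] sum_squares_bound[of "- X x" "Y x"]
      by (auto simp: abs_if)
    then show "norm (X x * Y x) \<le> norm ((X x)\<^sup>2 + (Y x)\<^sup>2)" by simp
  qed
qed



lemma powr_facts:
  fixes n d :: nat
  assumes n: "1 \<le> n"
  defines "hh \<equiv> real n powr (- real d / (2 + real d))"
  shows "0 < hh" "1 \<le> real n * hh" "real n * hh \<le> real n" "(real n * hh) ^ d * hh\<^sup>2 = 1"
proof -
  have n0: "0 < real n" using n by simp
  show "0 < hh" unfolding hh_def using n0 by simp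
  have r: "real n * hh = real n powr (2 / (2 + real d))"
  proof -
    have "real n * hh = real n powr 1 * real n powr (- real d / (2 + real d))"
      unfolding hh_def using n0 by simp
    also have "\<dots> = real n powr (1 + - real d / (2 + real d))" by (simp only: powr_add)
    also have "1 + - real d / (2 + real d) = 2 / (2 + real d)" by (simp add: field_simps)
    finally show ?thesis .
  qed
  show "1 \<le> real n * hh" unfolding r using n by (intro ge_one_powr_ge_zero) auto
  have "real n powr (2 / (2 + real d)) \<le> real n powr 1"
    using n by (intro powr_mono) auto
  then show "real n * hh \<le> real n" unfolding r using n0 by simp
  have e1: "(real n * hh) ^ d = real n powr (real d * (2 / (2 + real d)))"
    unfolding r using n0 by (simp only: powr_power)
  have e2: "hh\<^sup>2 = real n powr (real 2 * (- real d / (2 + real d)))"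
    unfolding hh_def using n0 by (simp only: powr_power)
  have "(real n * hh) ^ d * hh\<^sup>2 = real n powr (real d * (2 / (2 + real d))) * real n powr (real 2 * (- real d / (2 + real d)))"
    unfolding e1 e2 ..
  also have "\<dots> = real n powr (real d * (2 / (2 + real d)) + real 2 * (- real d / (2 + real d)))"
    by (simp only: powr_add)
  also have "real d * (2 / (2 + real d)) + real 2 * (- real d / (2 + real d)) = 0"
    by (simp add: field_simps)
  finally show "(real n * hh) ^ d * hh\<^sup>2 = 1" using n0 by simp
qed



lemma key:
  fixes M :: "'a measure" and \<epsilon> :: "int^'d \<Rightarrow> 'a \<Rightarrow> real"
    and K :: "real^'d \<Rightarrow> real" and B :: real and h :: "nat \<Rightarrow> real"
    and n :: nat and x :: "real^'d" and c Cm :: real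
  assumes P: "prob_space M"
    and meas: "\<And>i. \<epsilon> i \<in> borel_measurable M"
    and st: "strictly_stationary M \<epsilon>"
    and Knn: "\<And>y. 0 \<le> K y" and Ksupp: "\<And>y. supnorm y > 1 \<Longrightarrow> K y = 0"
    and c: "0 < c" and Cm: "0 < Cm" and Kb: "\<And>y. supnorm y \<le> 1 \<Longrightarrow> c \<le> K y \<and> K y \<le> Cm"
    and B: "B > 0"
    and C4: "cond_C4 M \<epsilon>"
    and hdef: "h n = real n powr (- real CARD('d) / (2 + real CARD('d)))"
    and n: "1 \<le> n" and x: "x \<in> unit_cube"
  shows "(\<integral>\<^sup>+ \<omega>. (SUP g\<in>Lip B. ennreal \<bar>g_est K h \<epsilon> g n x \<omega> - g x\<bar>)\<^sup>2 \<partial>M)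
     \<le> ennreal ((sqrt (2 * B\<^sup>2 + 2 * Cm * 2 ^ CARD('d) *
            (\<Sum>\<^sub>\<infinity>k. \<bar>integral\<^sup>L M (\<lambda>\<omega>. \<epsilon> 0 \<omega> * \<epsilon> k \<omega>)\<bar>) / c) * h n)\<^sup>2)"
proof -
  interpret prob_space M by (rule P)
  define d where "d = CARD('d)"
  define hh where "hh = h n"
  define \<gamma> where "\<gamma> = (\<lambda>k. integral\<^sup>L M (\<lambda>\<omega>. \<epsilon> 0 \<omega> * \<epsilon> k \<omega>))"
  define \<Gamma> where "\<Gamma> = (\<Sum>\<^sub>\<infinity>k. \<bar>\<gamma> k\<bar>)"
  have summ: "(\<lambda>k. \<bar>\<gamma> k\<bar>) summable_on UNIV" using C4 unfolding cond_C4_def \<gamma>_def by simp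
  have sq0: "integrable M (\<lambda>\<omega>. (\<epsilon> 0 \<omega>)\<^sup>2)" using C4 unfolding cond_C4_def by simp
  have Gnn: "0 \<le> \<Gamma>" unfolding \<Gamma>_def by (rule infsum_nonneg) simp
  have hf: "0 < hh" "1 \<le> real n * hh" "real n * hh \<le> real n" "(real n * hh) ^ d * hh\<^sup>2 = 1"
    using powr_facts[OF n, of d] unfolding hh_def hdef d_def by auto
  define r where "r = real n * hh"
  have n0: "0 < real n" using n by simp
  define p :: "int^'d \<Rightarrow> real^'d" where "p = grid_pt n"
  define Kx where "Kx = (\<lambda>i. K ((1 / h n) *\<^sub>R (x - p i)))"
  have Kxnn: "0 \<le> Kx i" for i unfolding Kx_def by (rule Knn)
  have KxC: "Kx i \<le> Cm" for i
    unfolding Kx_def using Kb Ksupp Cm by (metis less_le_not_le nle_le)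
  have scale: "supnorm ((1 / hh) *\<^sub>R v) \<le> 1 \<longleftrightarrow> supnorm v \<le> hh" for v :: "real^'d"
    using hf(1) by (simp add: supnorm_le_iff abs_mult divide_le_eq_1 field_simps)
  have Kx_supp: "Kx i \<noteq> 0 \<Longrightarrow> supnorm (x - p i) \<le> hh" for i
    unfolding Kx_def hh_def[symmetric] using Ksupp scale by (meson not_le)
  have Kx_low: "supnorm (x - p i) \<le> hh \<Longrightarrow> c \<le> Kx i" for i
    unfolding Kx_def hh_def[symmetric] using Kb scale by blast
  have pcomp: "p i $ k = real_of_int (i $ k) / real n" for i k
    unfolding p_def grid_pt_def by simp
  have Lam: "(Lambda n :: (int^'d) set) = {v::int^'d. \<forall>k. v $ k \<in> {1..int n}}" unfolding Lambda_def by auto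
  have finL: "finite (Lambda n :: (int^'d) set)" unfolding Lam by (rule vec_set_card) simp
  have p_cube: "i \<in> Lambda n \<Longrightarrow> p i \<in> unit_cube" for i
  proof -
    assume "i \<in> Lambda n"
    then have ik: "1 \<le> i $ k \<and> i $ k \<le> int n" for k unfolding Lambda_def by auto
    have a: "0 \<le> real_of_int (i $ k)" for k using ik[of k] by simp
    have b: "real_of_int (i $ k) \<le> real n" for k
    proof -
      have "real_of_int (i $ k) \<le> real_of_int (int n)" using ik[of k] by (simp only: of_int_le_iff)
      then show ?thesis by simp
    qed
    show ?thesis unfolding unit_cube_def p_def grid_pt_def using a b n0
      by (auto simp: divide_le_eq_1)
  qed
  define A where "A = {i \<in> Lambda n. supnorm (x - p i) \<le> hh}"
  define L where "L = \<lfloor>r\<rfloor>"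
  have "\<forall>k. \<exists>a::int. {a..<a + L} \<subseteq> {m::int. 1 \<le> m \<and> m \<le> int n \<and> \<bar>real n * x $ k - real_of_int m\<bar> \<le> r}"
  proof
    fix k
    have "0 \<le> x $ k" "x $ k \<le> 1" using x unfolding unit_cube_def by auto
    then have "0 \<le> real n * x $ k" "real n * x $ k \<le> real n" using n0 by (auto simp: mult_le_cancel_left1)
    then show "\<exists>a::int. {a..<a + L} \<subseteq> {m::int. 1 \<le> m \<and> m \<le> int n \<and> \<bar>real n * x $ k - real_of_int m\<bar> \<le> r}"
      unfolding L_def using count_1d hf(2,3) unfolding r_def by blast
  qed
  then obtain af where af: "\<And>k. {af k..<af k + L} \<subseteq> {m::int. 1 \<le> m \<and> m \<le> int n \<and> \<bar>real n * x $ k - real_of_int m\<bar> \<le> r}"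
    by metis
  have sub: "{v::int^'d. \<forall>k. v $ k \<in> {af k..<af k + L}} \<subseteq> A"
  proof
    fix v :: "int^'d" assume v: "v \<in> {v. \<forall>k. v $ k \<in> {af k..<af k + L}}"
    have vk: "1 \<le> v $ k \<and> v $ k \<le> int n \<and> \<bar>real n * x $ k - real_of_int (v $ k)\<bar> \<le> r" for k
    proof -
      have "v $ k \<in> {af k..<af k + L}" using v by simp
      then show ?thesis using af[of k] by blast
    qed
    have "\<bar>x $ k - real_of_int (v $ k) / real n\<bar> \<le> hh" for k
    proof -
      have "\<bar>x $ k - real_of_int (v $ k) / real n\<bar> = \<bar>real n * x $ k - real_of_int (v $ k)\<bar> / real n"
        using n0 by (simp add: field_simps)
      also have "\<dots> \<le> r / real n" using vk[of k] n0 by (simp add: divide_right_mono)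
      also have "\<dots> = hh" unfolding r_def using n0 by simp
      finally show ?thesis .
    qed
    then show "v \<in> A" unfolding A_def Lambda_def using vk
      by (auto simp: supnorm_le_iff pcomp)
  qed
  have finA: "finite A" unfolding A_def using finL by simp
  have cardsub: "card {v::int^'d. \<forall>k. v $ k \<in> {af k..<af k + L}} = nat L ^ d"
    by (subst vec_set_card(2)) (auto simp: d_def)
  have r1: "1 \<le> r" using hf(2) r_def by simp
  have L1a: "1 \<le> L" unfolding L_def using r1 by (simp add: le_floor_iff)
  have "r < real_of_int L + 1" unfolding L_def by (rule real_of_int_floor_add_one_gt)
  moreover have "1 \<le> real_of_int L" using L1a by simp
  ultimately have L1: "1 \<le> L" "r < 2 * real_of_int L" using L1a by linarith+
  have cardA: "(r / 2) ^ d \<le> real (card A)"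
  proof -
    have "(r / 2) ^ d \<le> real (nat L) ^ d"
      using L1 hf(2) unfolding r_def by (intro power_mono) auto
    also have "\<dots> = real (card {v::int^'d. \<forall>k. v $ k \<in> {af k..<af k + L}})"
      unfolding cardsub by simp
    also have "\<dots> \<le> real (card A)" using card_mono[OF finA sub] by simp
    finally show ?thesis .
  qed
  define D where "D = (\<Sum>i\<in>Lambda n. Kx i)"
  have D_low: "c * (r / 2) ^ d \<le> D"
  proof -
    have "c * (r / 2) ^ d \<le> c * real (card A)" using cardA c by simp
    also have "\<dots> = (\<Sum>i\<in>A. c)" by simp
    also have "\<dots> \<le> (\<Sum>i\<in>A. Kx i)" using Kx_low unfolding A_def by (intro sum_mono) auto
    also have "\<dots> \<le> D" unfolding D_def A_def using finL Kxnn by (intro sum_mono2) auto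
    finally show ?thesis .
  qed
  have rpos: "0 < r" using hf(2) r_def by simp
  have Dpos: "0 < D" using D_low c rpos by (smt (verit) zero_less_divide_iff zero_less_mult_iff zero_less_power)
  have invr: "1 / r ^ d = hh\<^sup>2"
  proof -
    have "r ^ d * hh\<^sup>2 = 1" using hf(4) unfolding r_def .
    moreover have "r ^ d \<noteq> 0" using rpos by simp
    ultimately show ?thesis by (simp add: divide_eq_eq mult.commute)
  qed
  have wmax: "Cm / D \<le> Cm * 2 ^ d * hh\<^sup>2 / c"
  proof -
    have "Cm / D \<le> Cm / (c * (r / 2) ^ d)"
      using D_low c rpos Cm Dpos by (intro divide_left_mono) auto
    also have "\<dots> = Cm * 2 ^ d * (1 / r ^ d) / c" by (simp add: power_divide field_simps)
    finally show ?thesis unfolding invr .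
  qed
  define w where "w = (\<lambda>i. Kx i / D)"
  have wnn: "0 \<le> w i" for i unfolding w_def using Kxnn Dpos by simp
  have wle: "w i \<le> Cm / D" for i unfolding w_def using KxC Dpos by (simp add: divide_right_mono)
  have wsum: "(\<Sum>i\<in>Lambda n. w i) = 1" unfolding w_def D_def[symmetric] sum_divide_distrib[symmetric]
    using Dpos by simp
  define S where "S = (\<lambda>\<omega>. \<Sum>i\<in>Lambda n. w i * \<epsilon> i \<omega>)"
  have sqi: "integrable M (\<lambda>\<omega>. (\<epsilon> i \<omega>)\<^sup>2)" for i by (rule stat_sq[OF st meas sq0])
  have prodi: "integrable M (\<lambda>\<omega>. \<epsilon> i \<omega> * \<epsilon> j \<omega>)" for i j
    by (rule prod_integrable[OF sqi sqi meas meas])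
  have cov: "integral\<^sup>L M (\<lambda>\<omega>. \<epsilon> i \<omega> * \<epsilon> j \<omega>) = \<gamma> (j - i)" for i j
    unfolding \<gamma>_def by (rule stat_cov[OF st meas])
  have Ssq: "(S \<omega>)\<^sup>2 = (\<Sum>i\<in>Lambda n. \<Sum>j\<in>Lambda n. w i * w j * (\<epsilon> i \<omega> * \<epsilon> j \<omega>))" for \<omega>
    unfolding S_def power2_eq_square sum_product by (simp add: mult_ac)
  have Sint: "integrable M (\<lambda>\<omega>. (S \<omega>)\<^sup>2)"
    unfolding Ssq by (intro Bochner_Integration.integrable_sum Bochner_Integration.integrable_mult_right prodi)
  have ES: "integral\<^sup>L M (\<lambda>\<omega>. (S \<omega>)\<^sup>2) = (\<Sum>i\<in>Lambda n. \<Sum>j\<in>Lambda n. w i * w j * \<gamma> (j - i))"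
    unfolding Ssq
    by (simp add: Bochner_Integration.integral_sum Bochner_Integration.integrable_sum Bochner_Integration.integrable_mult_right prodi cov)
  have gsum: "(\<Sum>j\<in>Lambda n. \<bar>\<gamma> (j - i)\<bar>) \<le> \<Gamma>" for i
  proof -
    have inj: "inj_on (\<lambda>j. j - i) (Lambda n :: (int^'d) set)" by (intro inj_onI) simp
    have "(\<Sum>j\<in>Lambda n. \<bar>\<gamma> (j - i)\<bar>) = (\<Sum>k\<in>(\<lambda>j. j - i) ` Lambda n. \<bar>\<gamma> k\<bar>)"
      by (simp add: sum.reindex[OF inj])
    also have "\<dots> \<le> \<Gamma>" unfolding \<Gamma>_def
      by (rule finite_sum_le_infsum[OF summ]) (use finL in auto)
    finally show ?thesis .
  qed
  have ES_le: "integral\<^sup>L M (\<lambda>\<omega>. (S \<omega>)\<^sup>2) \<le> Cm / D * \<Gamma>"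
  proof -
    have inner: "(\<Sum>j\<in>Lambda n. w i * w j * \<gamma> (j - i)) \<le> w i * (Cm / D * \<Gamma>)" for i
    proof -
      have "(\<Sum>j\<in>Lambda n. w i * w j * \<gamma> (j - i)) \<le> (\<Sum>j\<in>Lambda n. w i * (Cm / D) * \<bar>\<gamma> (j - i)\<bar>)"
      proof (rule sum_mono)
        fix j
        have "w i * w j * \<gamma> (j - i) \<le> w i * w j * \<bar>\<gamma> (j - i)\<bar>"
          using wnn[of i] wnn[of j] by (intro mult_left_mono) auto
        also have "\<dots> \<le> w i * (Cm / D) * \<bar>\<gamma> (j - i)\<bar>"
          using wnn[of i] wle[of j] by (intro mult_right_mono mult_left_mono) auto
        finally show "w i * w j * \<gamma> (j - i) \<le> w i * (Cm / D) * \<bar>\<gamma> (j - i)\<bar>" .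
      qed
      also have "\<dots> = w i * (Cm / D) * (\<Sum>j\<in>Lambda n. \<bar>\<gamma> (j - i)\<bar>)"
        by (simp add: sum_distrib_left)
      also have "\<dots> \<le> w i * (Cm / D) * \<Gamma>"
        using gsum[of i] wnn[of i] Cm Dpos by (intro mult_left_mono) auto
      finally show ?thesis by simp
    qed
    have "(\<Sum>i\<in>Lambda n. \<Sum>j\<in>Lambda n. w i * w j * \<gamma> (j - i)) \<le> (\<Sum>i\<in>Lambda n. w i * (Cm / D * \<Gamma>))"
      by (rule sum_mono) (rule inner)
    also have "\<dots> = Cm / D * \<Gamma>" by (simp only: sum_distrib_right[symmetric] wsum mult_1_left)
    finally show ?thesis unfolding ES .
  qed
  have pointwise: "\<bar>g_est K h \<epsilon> g n x \<omega> - g x\<bar> \<le> B * hh + \<bar>S \<omega>\<bar>" if g: "g \<in> Lip B" for g \<omega>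
  proof -
    have est: "g_est K h \<epsilon> g n x \<omega> = (\<Sum>i\<in>Lambda n. w i * (g (p i) + \<epsilon> i \<omega>))"
      unfolding g_est_def w_def D_def Kx_def p_def
      by (simp add: sum_divide_distrib mult.commute)
    have gx: "g x = (\<Sum>i\<in>Lambda n. w i * g x)"
      by (simp add: sum_distrib_right[symmetric] wsum)
    have dec: "g_est K h \<epsilon> g n x \<omega> - g x = (\<Sum>i\<in>Lambda n. w i * (g (p i) - g x)) + S \<omega>"
      unfolding est S_def by (subst gx) (simp add: sum_subtractf[symmetric] sum.distrib[symmetric] algebra_simps)
    have bias: "\<bar>\<Sum>i\<in>Lambda n. w i * (g (p i) - g x)\<bar> \<le> B * hh"
    proof -
      have "\<bar>\<Sum>i\<in>Lambda n. w i * (g (p i) - g x)\<bar> \<le> (\<Sum>i\<in>Lambda n. \<bar>w i * (g (p i) - g x)\<bar>)"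
        by (rule sum_abs)
      also have "\<dots> \<le> (\<Sum>i\<in>Lambda n. w i * (B * hh))"
      proof (rule sum_mono)
        fix i :: "int^'d" assume i: "i \<in> Lambda n"
        show "\<bar>w i * (g (p i) - g x)\<bar> \<le> w i * (B * hh)"
        proof (cases "Kx i = 0")
          case True then show ?thesis unfolding w_def by simp
        next
          case False
          then have sn: "supnorm (x - p i) \<le> hh" by (rule Kx_supp)
          have "\<bar>g x - g (p i)\<bar> \<le> B * supnorm (x - p i)"
            using g x p_cube[OF i] unfolding Lip_def by blast
          also have "\<dots> \<le> B * hh" using sn B by simp
          finally have "\<bar>g (p i) - g x\<bar> \<le> B * hh" by simp
          then show ?thesis using wnn[of i] by (simp add: abs_mult mult_left_mono)
        qed
      qed
      also have "\<dots> = B * hh" by (simp only: sum_distrib_right[symmetric] wsum mult_1_left)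
      finally show ?thesis .
    qed
    show ?thesis unfolding dec using bias by linarith
  qed
  have pw: "(SUP g\<in>Lip B. ennreal \<bar>g_est K h \<epsilon> g n x \<omega> - g x\<bar>)\<^sup>2 \<le> ennreal (2 * B\<^sup>2 * hh\<^sup>2 + 2 * (S \<omega>)\<^sup>2)" for \<omega>
  proof -
    have "(SUP g\<in>Lip B. ennreal \<bar>g_est K h \<epsilon> g n x \<omega> - g x\<bar>) \<le> ennreal (B * hh + \<bar>S \<omega>\<bar>)"
      by (rule SUP_least) (simp add: ennreal_leI pointwise)
    then have "(SUP g\<in>Lip B. ennreal \<bar>g_est K h \<epsilon> g n x \<omega> - g x\<bar>)\<^sup>2 \<le> (ennreal (B * hh + \<bar>S \<omega>\<bar>))\<^sup>2"
      by (intro power_mono) auto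
    also have "\<dots> = ennreal ((B * hh + \<bar>S \<omega>\<bar>)\<^sup>2)"
      using B hf(1) by (intro ennreal_power) auto
    also have "\<dots> \<le> ennreal (2 * B\<^sup>2 * hh\<^sup>2 + 2 * (S \<omega>)\<^sup>2)"
    proof (rule ennreal_leI)
      have "0 \<le> (B * hh - \<bar>S \<omega>\<bar>)\<^sup>2" by simp
      then show "(B * hh + \<bar>S \<omega>\<bar>)\<^sup>2 \<le> 2 * B\<^sup>2 * hh\<^sup>2 + 2 * (S \<omega>)\<^sup>2"
        by (simp add: power2_eq_square algebra_simps)
    qed
    finally show ?thesis .
  qed
  have Sm: "S \<in> borel_measurable M" unfolding S_def
    by (intro borel_measurable_sum borel_measurable_times measurable_const meas) simp
  have int2: "integrable M (\<lambda>\<omega>. 2 * B\<^sup>2 * hh\<^sup>2 + 2 * (S \<omega>)\<^sup>2)"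
    by (intro Bochner_Integration.integrable_add integrable_const integrable_mult_right Sint)
  have "(\<integral>\<^sup>+ \<omega>. (SUP g\<in>Lip B. ennreal \<bar>g_est K h \<epsilon> g n x \<omega> - g x\<bar>)\<^sup>2 \<partial>M)
      \<le> (\<integral>\<^sup>+ \<omega>. ennreal (2 * B\<^sup>2 * hh\<^sup>2 + 2 * (S \<omega>)\<^sup>2) \<partial>M)"
    by (intro nn_integral_mono pw)
  also have "\<dots> = ennreal (integral\<^sup>L M (\<lambda>\<omega>. 2 * B\<^sup>2 * hh\<^sup>2 + 2 * (S \<omega>)\<^sup>2))"
    by (rule nn_integral_eq_integral[OF int2]) simp
  also have "integral\<^sup>L M (\<lambda>\<omega>. 2 * B\<^sup>2 * hh\<^sup>2 + 2 * (S \<omega>)\<^sup>2) = 2 * B\<^sup>2 * hh\<^sup>2 + 2 * integral\<^sup>L M (\<lambda>\<omega>. (S \<omega>)\<^sup>2)"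
    using Sint by (simp add: Bochner_Integration.integral_add prob_space)
  also have "\<dots> \<le> (sqrt (2 * B\<^sup>2 + 2 * Cm * 2 ^ d * \<Gamma> / c) * hh)\<^sup>2"
  proof -
    have "integral\<^sup>L M (\<lambda>\<omega>. (S \<omega>)\<^sup>2) \<le> Cm * 2 ^ d * hh\<^sup>2 / c * \<Gamma>"
      using ES_le wmax Gnn by (meson mult_right_mono order_trans)
    moreover have "0 \<le> 2 * B\<^sup>2 + 2 * Cm * 2 ^ d * \<Gamma> / c" using Gnn c Cm by simp
    then have e1: "(sqrt (2 * B\<^sup>2 + 2 * Cm * 2 ^ d * \<Gamma> / c) * hh)\<^sup>2
        = (2 * B\<^sup>2 + 2 * Cm * 2 ^ d * \<Gamma> / c) * hh\<^sup>2"
      by (simp add: power_mult_distrib)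
    have e2: "(2 * B\<^sup>2 + 2 * Cm * 2 ^ d * \<Gamma> / c) * hh\<^sup>2 = 2 * B\<^sup>2 * hh\<^sup>2 + 2 * (Cm * 2 ^ d * hh\<^sup>2 / c * \<Gamma>)"
      by (simp add: algebra_simps)
    show ?thesis unfolding e1 e2 using \<open>integral\<^sup>L M (\<lambda>\<omega>. (S \<omega>)\<^sup>2) \<le> Cm * 2 ^ d * hh\<^sup>2 / c * \<Gamma>\<close>
      by linarith
  qed
  finally show ?thesis unfolding hh_def \<Gamma>_def \<gamma>_def d_def by (simp add: ennreal_leI)
qed



theorem corollary2:
  fixes M :: "'a measure" and \<epsilon> :: "int^'d \<Rightarrow> 'a \<Rightarrow> real"
    and K :: "real^'d \<Rightarrow> real" and B :: real and h :: "nat \<Rightarrow> real"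
  assumes "prob_space M"
    and "\<And>i. \<epsilon> i \<in> borel_measurable M"
    and "strictly_stationary M \<epsilon>"
    and "integrable M (\<epsilon> 0)" and "integral\<^sup>L M (\<epsilon> 0) = 0"
    and "kernel_A1 K"
    and "B > 0"
    and "cond_C4 M \<epsilon>"
    and "\<And>n. h n = real n powr (- real CARD('d) / (2 + real CARD('d)))"
  shows "\<exists>C N. \<forall>n\<ge>N.
     (SUP x\<in>unit_cube.
        (\<integral>\<^sup>+ \<omega>. (SUP g\<in>Lip B. ennreal \<bar>g_est K h \<epsilon> g n x \<omega> - g x\<bar>)\<^sup>2 \<partial>M))
     \<le> ennreal ((C * real n powr (- real CARD('d) / (2 + real CARD('d))))\<^sup>2)"
proof -
  obtain c Cm where c: "0 < c" and Cm: "0 < Cm" and Kb: "\<And>y. supnorm y \<le> 1 \<Longrightarrow> c \<le> K y \<and> K y \<le> Cm"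
    using assms(6) unfolding kernel_A1_def by blast
  have Knn: "\<And>y. 0 \<le> K y" and Ksupp: "\<And>y. supnorm y > 1 \<Longrightarrow> K y = 0"
    using assms(6) unfolding kernel_A1_def by blast+
  define C0 where "C0 = sqrt (2 * B\<^sup>2 + 2 * Cm * 2 ^ CARD('d) *
            (\<Sum>\<^sub>\<infinity>k. \<bar>integral\<^sup>L M (\<lambda>\<omega>. \<epsilon> 0 \<omega> * \<epsilon> k \<omega>)\<bar>) / c)"
  show ?thesis
  proof (intro exI allI impI)
    fix n :: nat assume n: "1 \<le> n"
    show "(SUP x\<in>unit_cube.
        (\<integral>\<^sup>+ \<omega>. (SUP g\<in>Lip B. ennreal \<bar>g_est K h \<epsilon> g n x \<omega> - g x\<bar>)\<^sup>2 \<partial>M))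
     \<le> ennreal ((C0 * real n powr (- real CARD('d) / (2 + real CARD('d))))\<^sup>2)"
    proof (rule SUP_least)
      fix x :: "real^'d" assume x: "x \<in> unit_cube"
      show "(\<integral>\<^sup>+ \<omega>. (SUP g\<in>Lip B. ennreal \<bar>g_est K h \<epsilon> g n x \<omega> - g x\<bar>)\<^sup>2 \<partial>M)
         \<le> ennreal ((C0 * real n powr (- real CARD('d) / (2 + real CARD('d))))\<^sup>2)"
        using key[of M \<epsilon> K c Cm B h n x, OF assms(1,2,3) Knn Ksupp c Cm Kb assms(7,8) assms(9)[of n] n x] unfolding C0_def assms(9) .
    qed
  qed
qed


end
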